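(* An algebra $\langle M,+,\vee,\wedge,0,1,-1\rangle$ (arities $2,2,2,0,0,0$) is isomorphic to a subalgebra of the $\{+,\vee,\wedge,0,1,-1\}$-reduct of some unital commutative lattice-ordered group (with $1$ interpreted as the strong unit and $-1$ as its inverse) if and only if it is a cancellative unital commutative distributive $\ell$-monoid.
   Context: A \emph{unital commutative distributive $\ell$-monoid} is an algebra $\langle M,+,\vee,\wedge,0,1,-1\rangle$ such that: $\langle M,\vee,\wedge\rangle$ is a distributive lattice (with order $\le$); $\langle M,+,0\rangle$ is a commutative monoid; $+$ distributes over $\vee$ and $\wedge$; $-1+1=0$; $-1\le 0\le 1$; and for every $x\in M$ there is $n\in\mathbb{N}\setminus\{0\}$ with $(-1)+\dots+(-1)\le x\le 1+\dots+1$ ($n$ summands each). It is \emph{cancellative} if $x+z=y+z$ implies $x=y$. A unital commutative $\ell$-group is a commutative lattice-ordered group with a strong unit $u\ge 0$ (for every $g$ there is $n$ with $g\le nu$). *)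

theory Defs
  imports Main
begin

record 'a alg =
  car  :: "'a set"
  add  :: "'a \<Rightarrow> 'a \<Rightarrow> 'a"
  jn   :: "'a \<Rightarrow> 'a \<Rightarrow> 'a"
  mt   :: "'a \<Rightarrow> 'a \<Rightarrow> 'a"
  zr   :: "'a"
  one  :: "'a"
  mone :: "'a"

definition is_alg :: "('a, 'b) alg_scheme \<Rightarrow> bool" where
  "is_alg M \<longleftrightarrow>
     (\<forall>x\<in>car M. \<forall>y\<in>car M. add M x y \<in> car M \<and> jn M x y \<in> car M \<and> mt M x y \<in> car M)
     \<and> zr M \<in> car M \<and> one M \<in> car M \<and> mone M \<in> car M"

definition ale :: "('a, 'b) alg_scheme \<Rightarrow> 'a \<Rightarrow> 'a \<Rightarrow> bool" where
  "ale M x y \<longleftrightarrow> jn M x y = y"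

primrec nsum :: "('a, 'b) alg_scheme \<Rightarrow> nat \<Rightarrow> 'a \<Rightarrow> 'a" where
  "nsum M 0 x = zr M"
| "nsum M (Suc n) x = add M x (nsum M n x)"

definition distrib_lattice_on :: "('a, 'b) alg_scheme \<Rightarrow> bool" where
  "distrib_lattice_on M \<longleftrightarrow>
     (\<forall>x\<in>car M. \<forall>y\<in>car M. jn M x y = jn M y x \<and> mt M x y = mt M y x)
   \<and> (\<forall>x\<in>car M. \<forall>y\<in>car M. \<forall>z\<in>car M.
        jn M (jn M x y) z = jn M x (jn M y z) \<and> mt M (mt M x y) z = mt M x (mt M y z))
   \<and> (\<forall>x\<in>car M. \<forall>y\<in>car M. jn M x (mt M x y) = x \<and> mt M x (jn M x y) = x)
   \<and> (\<forall>x\<in>car M. \<forall>y\<in>car M. \<forall>z\<in>car M. mt M x (jn M y z) = jn M (mt M x y) (mt M x z))"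

definition lattice_on :: "('a, 'b) alg_scheme \<Rightarrow> bool" where
  "lattice_on M \<longleftrightarrow>
     (\<forall>x\<in>car M. \<forall>y\<in>car M. jn M x y = jn M y x \<and> mt M x y = mt M y x)
   \<and> (\<forall>x\<in>car M. \<forall>y\<in>car M. \<forall>z\<in>car M.
        jn M (jn M x y) z = jn M x (jn M y z) \<and> mt M (mt M x y) z = mt M x (mt M y z))
   \<and> (\<forall>x\<in>car M. \<forall>y\<in>car M. jn M x (mt M x y) = x \<and> mt M x (jn M x y) = x)"

definition comm_monoid_on :: "('a, 'b) alg_scheme \<Rightarrow> bool" where
  "comm_monoid_on M \<longleftrightarrow>
     (\<forall>x\<in>car M. \<forall>y\<in>car M. \<forall>z\<in>car M. add M (add M x y) z = add M x (add M y z))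
   \<and> (\<forall>x\<in>car M. \<forall>y\<in>car M. add M x y = add M y x)
   \<and> (\<forall>x\<in>car M. add M (zr M) x = x)"

definition ucdlm :: "('a, 'b) alg_scheme \<Rightarrow> bool" where
  "ucdlm M \<longleftrightarrow> is_alg M \<and> distrib_lattice_on M \<and> comm_monoid_on M
   \<and> (\<forall>x\<in>car M. \<forall>y\<in>car M. \<forall>z\<in>car M.
        add M x (jn M y z) = jn M (add M x y) (add M x z)
      \<and> add M x (mt M y z) = mt M (add M x y) (add M x z))
   \<and> add M (mone M) (one M) = zr M
   \<and> ale M (mone M) (zr M) \<and> ale M (zr M) (one M)
   \<and> (\<forall>x\<in>car M. \<exists>n. n \<noteq> 0 \<and> ale M (nsum M n (mone M)) x \<and> ale M x (nsum M n (one M)))"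

definition cancellative :: "('a, 'b) alg_scheme \<Rightarrow> bool" where
  "cancellative M \<longleftrightarrow>
     (\<forall>x\<in>car M. \<forall>y\<in>car M. \<forall>z\<in>car M. add M x z = add M y z \<longrightarrow> x = y)"

text \<open>Unital commutative l-group: the record fields give +, join, meet, 0,
  the strong unit u (field one) and -u (field mone); neg is the group inverse.\<close>
record 'a lgrp = "'a alg" +
  neg :: "'a \<Rightarrow> 'a"

definition unital_comm_lgroup :: "('a, 'b) lgrp_scheme \<Rightarrow> bool" where
  "unital_comm_lgroup G \<longleftrightarrow>
     (\<forall>x\<in>car G. \<forall>y\<in>car G. add G x y \<in> car G \<and> jn G x y \<in> car G \<and> mt G x y \<in> car G)
   \<and> zr G \<in> car G \<and> (\<forall>x\<in>car G. neg G x \<in> car G)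
   \<and> comm_monoid_on G
   \<and> (\<forall>x\<in>car G. add G (neg G x) x = zr G)
   \<and> lattice_on G
   \<and> (\<forall>x\<in>car G. \<forall>y\<in>car G. \<forall>z\<in>car G.
        add G x (jn G y z) = jn G (add G x y) (add G x z))
   \<and> one G \<in> car G \<and> ale G (zr G) (one G)
   \<and> (\<forall>g\<in>car G. \<exists>n. ale G g (nsum G n (one G)))
   \<and> mone G = neg G (one G)"

definition embeds :: "('a, 'b) alg_scheme \<Rightarrow> ('c, 'd) lgrp_scheme \<Rightarrow> bool" where
  "embeds M G \<longleftrightarrow> (\<exists>f. f ` car M \<subseteq> car G \<and> inj_on f (car M)
     \<and> (\<forall>x\<in>car M. \<forall>y\<in>car M. f (add M x y) = add G (f x) (f y)
          \<and> f (jn M x y) = jn G (f x) (f y) \<and> f (mt M x y) = mt G (f x) (f y))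
     \<and> f (zr M) = zr G \<and> f (one M) = one G \<and> f (mone M) = mone G)"

end

theory Submission
  imports Defs
begin


locale lg = fixes G :: "('c,'d) lgrp_scheme" assumes G: "unital_comm_lgroup G"
begin

abbreviation pl (infixl "\<oplus>" 65) where "x \<oplus> y \<equiv> add G x y"
abbreviation jj (infixl "\<curlyvee>" 67) where "x \<curlyvee> y \<equiv> jn G x y"
abbreviation mm (infixl "\<curlywedge>" 68) where "x \<curlywedge> y \<equiv> mt G x y"
abbreviation le (infix "\<preceq>" 50) where "x \<preceq> y \<equiv> ale G x y"
abbreviation "C \<equiv> car G"
abbreviation "ng \<equiv> neg G"
abbreviation "z \<equiv> zr G"

lemma cl[simp]: "x \<in> C \<Longrightarrow> y \<in> C \<Longrightarrow> x \<oplus> y \<in> C" "x \<in> C \<Longrightarrow> y \<in> C \<Longrightarrow> x \<curlyvee> y \<in> C"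
  "x \<in> C \<Longrightarrow> y \<in> C \<Longrightarrow> x \<curlywedge> y \<in> C" "x \<in> C \<Longrightarrow> ng x \<in> C" "z \<in> C" "one G \<in> C"
  using G unfolding unital_comm_lgroup_def by auto

lemma assoc: "x \<in> C \<Longrightarrow> y \<in> C \<Longrightarrow> w \<in> C \<Longrightarrow> x \<oplus> y \<oplus> w = x \<oplus> (y \<oplus> w)"
  and comm: "x \<in> C \<Longrightarrow> y \<in> C \<Longrightarrow> x \<oplus> y = y \<oplus> x"
  and lz[simp]: "x \<in> C \<Longrightarrow> z \<oplus> x = x"
  and linv[simp]: "x \<in> C \<Longrightarrow> ng x \<oplus> x = z"
  using G unfolding unital_comm_lgroup_def comm_monoid_on_def by auto

lemma comm_left: "x \<in> C \<Longrightarrow> y \<in> C \<Longrightarrow> w \<in> C \<Longrightarrow> x \<oplus> (y \<oplus> w) = y \<oplus> (x \<oplus> w)"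
proof -
  assume h: "x \<in> C" "y \<in> C" "w \<in> C"
  have "x \<oplus> (y \<oplus> w) = (x \<oplus> y) \<oplus> w" using h by (simp add: assoc)
  also have "\<dots> = (y \<oplus> x) \<oplus> w" using h by (simp add: comm[of x y])
  also have "\<dots> = y \<oplus> (x \<oplus> w)" using h by (simp add: assoc)
  finally show ?thesis .
qed
lemmas ac = assoc comm comm_left

lemma rz[simp]: "x \<in> C \<Longrightarrow> x \<oplus> z = x" using comm[of x z] by simp
lemma rinv[simp]: "x \<in> C \<Longrightarrow> x \<oplus> ng x = z" using comm[of x "ng x"] by simp

lemma cancel: assumes "x \<in> C" "y \<in> C" "w \<in> C" "x \<oplus> w = y \<oplus> w" shows "x = y"
proof -
  have "x = x \<oplus> (w \<oplus> ng w)" using assms by simp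
  also have "\<dots> = (x \<oplus> w) \<oplus> ng w" using assms(1-3) by (simp add: assoc)
  also have "\<dots> = (y \<oplus> w) \<oplus> ng w" using assms by simp
  also have "\<dots> = y" using assms(1-3) by (simp add: assoc)
  finally show ?thesis .
qed

lemma jc: "x \<in> C \<Longrightarrow> y \<in> C \<Longrightarrow> x \<curlyvee> y = y \<curlyvee> x"
  and mc: "x \<in> C \<Longrightarrow> y \<in> C \<Longrightarrow> x \<curlywedge> y = y \<curlywedge> x"
  and ja: "x \<in> C \<Longrightarrow> y \<in> C \<Longrightarrow> w \<in> C \<Longrightarrow> x \<curlyvee> y \<curlyvee> w = x \<curlyvee> (y \<curlyvee> w)"
  and ma: "x \<in> C \<Longrightarrow> y \<in> C \<Longrightarrow> w \<in> C \<Longrightarrow> x \<curlywedge> y \<curlywedge> w = x \<curlywedge> (y \<curlywedge> w)"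
  and jab: "x \<in> C \<Longrightarrow> y \<in> C \<Longrightarrow> x \<curlyvee> (x \<curlywedge> y) = x"
  and mab: "x \<in> C \<Longrightarrow> y \<in> C \<Longrightarrow> x \<curlywedge> (x \<curlyvee> y) = x"
  and ld: "x \<in> C \<Longrightarrow> y \<in> C \<Longrightarrow> w \<in> C \<Longrightarrow> x \<oplus> (y \<curlyvee> w) = (x \<oplus> y) \<curlyvee> (x \<oplus> w)"
  and zu: "z \<preceq> one G"
  and su: "g \<in> C \<Longrightarrow> \<exists>n. g \<preceq> nsum G n (one G)"
  and mo: "mone G = ng (one G)"
  using G unfolding unital_comm_lgroup_def lattice_on_def by auto

lemma ji: "x \<in> C \<Longrightarrow> x \<curlyvee> x = x"
proof -
  assume x: "x \<in> C"
  have "x \<curlyvee> x = x \<curlyvee> (x \<curlywedge> (x \<curlyvee> x))" using mab[OF x x] by simp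
  also have "\<dots> = x" using x by (simp add: jab)
  finally show ?thesis .
qed
lemma mi: "x \<in> C \<Longrightarrow> x \<curlywedge> x = x"
proof -
  assume x: "x \<in> C"
  have "x \<curlywedge> x = x \<curlywedge> (x \<curlyvee> (x \<curlywedge> x))" using jab[OF x x] by simp
  also have "\<dots> = x" using x by (simp add: mab)
  finally show ?thesis .
qed

lemma le_mt: assumes "x \<in> C" "y \<in> C" shows "x \<preceq> y \<longleftrightarrow> x \<curlywedge> y = x"
  unfolding ale_def
proof
  assume "x \<curlyvee> y = y"
  thus "x \<curlywedge> y = x" using mab[OF assms] by simp
next
  assume h: "x \<curlywedge> y = x"
  have "x \<curlyvee> y = (x \<curlywedge> y) \<curlyvee> y" using h by simp
  also have "\<dots> = y \<curlyvee> (y \<curlywedge> x)" using assms by (simp add: jc mc)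
  also have "\<dots> = y" using assms by (simp add: jab)
  finally show "x \<curlyvee> y = y" .
qed

lemma lrefl: "x \<in> C \<Longrightarrow> x \<preceq> x" by (simp add: ale_def ji)
lemma ltrans: assumes "x \<in> C" "y \<in> C" "w \<in> C" "x \<preceq> y" "y \<preceq> w" shows "x \<preceq> w"
proof -
  have h: "x \<curlyvee> y = y" "y \<curlyvee> w = w" using assms(4,5) unfolding ale_def by auto
  have "x \<curlyvee> w = x \<curlyvee> (y \<curlyvee> w)" using h by simp
  also have "\<dots> = (x \<curlyvee> y) \<curlyvee> w" using assms(1-3) by (simp add: ja)
  also have "\<dots> = w" using h by simp
  finally show ?thesis unfolding ale_def .
qed
lemma lanti: assumes "x \<in> C" "y \<in> C" "x \<preceq> y" "y \<preceq> x" shows "x = y"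
proof -
  have h: "x \<curlyvee> y = y" "y \<curlyvee> x = x" using assms(3,4) unfolding ale_def by auto
  have "x = y \<curlyvee> x" using h by simp
  also have "\<dots> = x \<curlyvee> y" using assms(1,2) by (simp add: jc)
  finally show ?thesis using h by simp
qed
lemma ju1: assumes "x \<in> C" "y \<in> C" shows "x \<preceq> x \<curlyvee> y"
proof -
  have "x \<curlyvee> (x \<curlyvee> y) = (x \<curlyvee> x) \<curlyvee> y" using assms by (simp add: ja)
  thus ?thesis unfolding ale_def using assms by (simp add: ji)
qed
lemma ju2: "x \<in> C \<Longrightarrow> y \<in> C \<Longrightarrow> y \<preceq> x \<curlyvee> y" using ju1[of y x] by (simp add: jc)
lemma jlub: assumes "x \<in> C" "y \<in> C" "w \<in> C" "x \<preceq> w" "y \<preceq> w" shows "x \<curlyvee> y \<preceq> w"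
proof -
  have h: "x \<curlyvee> w = w" "y \<curlyvee> w = w" using assms(4,5) unfolding ale_def by auto
  have "(x \<curlyvee> y) \<curlyvee> w = x \<curlyvee> (y \<curlyvee> w)" using assms(1-3) by (simp add: ja)
  thus ?thesis unfolding ale_def using h by simp
qed
lemma ml1: assumes "x \<in> C" "y \<in> C" shows "x \<curlywedge> y \<preceq> x"
proof -
  have "(x \<curlywedge> y) \<curlywedge> x = x \<curlywedge> (x \<curlywedge> y)" using assms by (simp add: mc)
  also have "\<dots> = (x \<curlywedge> x) \<curlywedge> y" using assms by (simp add: ma)
  also have "\<dots> = x \<curlywedge> y" using assms by (simp add: mi)
  finally show ?thesis using assms by (simp add: le_mt)
qed
lemma ml2: "x \<in> C \<Longrightarrow> y \<in> C \<Longrightarrow> x \<curlywedge> y \<preceq> y" using ml1[of y x] by (simp add: mc)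
lemma mglb: assumes "x \<in> C" "y \<in> C" "w \<in> C" "w \<preceq> x" "w \<preceq> y" shows "w \<preceq> x \<curlywedge> y"
proof -
  have h: "w \<curlywedge> x = w" "w \<curlywedge> y = w" using assms by (simp_all add: le_mt)
  have "w \<curlywedge> (x \<curlywedge> y) = (w \<curlywedge> x) \<curlywedge> y" using assms(1-3) by (simp add: ma)
  thus ?thesis using h assms by (simp add: le_mt)
qed

lemma mono: assumes "x \<in> C" "y \<in> C" "w \<in> C" "y \<preceq> w" shows "x \<oplus> y \<preceq> x \<oplus> w"
proof -
  have h: "y \<curlyvee> w = w" using assms(4) unfolding ale_def by auto
  have "(x \<oplus> y) \<curlyvee> (x \<oplus> w) = x \<oplus> (y \<curlyvee> w)" using assms(1-3) by (simp add: ld)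
  thus ?thesis unfolding ale_def using h by simp
qed
lemma mono2: "x \<in> C \<Longrightarrow> y \<in> C \<Longrightarrow> w \<in> C \<Longrightarrow> y \<preceq> w \<Longrightarrow> y \<oplus> x \<preceq> w \<oplus> x"
  using mono[of x y w] by (simp add: comm[of _ x])
lemma canl: "x \<in> C \<Longrightarrow> y \<in> C \<Longrightarrow> ng x \<oplus> (x \<oplus> y) = y"
  by (simp add: assoc[symmetric])
lemma canl2: "x \<in> C \<Longrightarrow> y \<in> C \<Longrightarrow> x \<oplus> (ng x \<oplus> y) = y"
  by (simp add: assoc[symmetric])
lemma reflect: assumes "x \<in> C" "y \<in> C" "w \<in> C" "x \<oplus> y \<preceq> x \<oplus> w" shows "y \<preceq> w"
proof -
  have "ng x \<oplus> (x \<oplus> y) \<preceq> ng x \<oplus> (x \<oplus> w)" by (rule mono) (use assms in auto)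
  thus ?thesis using assms(1-3) by (simp add: canl)
qed

lemma md: assumes "x \<in> C" "y \<in> C" "w \<in> C" shows "x \<oplus> (y \<curlywedge> w) = (x \<oplus> y) \<curlywedge> (x \<oplus> w)"
proof (rule lanti)
  show "x \<oplus> (y \<curlywedge> w) \<preceq> (x \<oplus> y) \<curlywedge> (x \<oplus> w)" using assms
    by (intro mglb mono ml1 ml2) auto
  let ?v = "(x \<oplus> y) \<curlywedge> (x \<oplus> w)"
  have "ng x \<oplus> ?v \<preceq> y \<curlywedge> w"
  proof (rule mglb)
    have "ng x \<oplus> ?v \<preceq> ng x \<oplus> (x \<oplus> y)" using assms by (intro mono ml1) auto
    thus "ng x \<oplus> ?v \<preceq> y" using assms by (simp add: canl canl2)
    have "ng x \<oplus> ?v \<preceq> ng x \<oplus> (x \<oplus> w)" using assms by (intro mono ml2) auto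
    thus "ng x \<oplus> ?v \<preceq> w" using assms by (simp add: canl canl2)
  qed (use assms in auto)
  hence "x \<oplus> (ng x \<oplus> ?v) \<preceq> x \<oplus> (y \<curlywedge> w)" using assms by (intro mono) auto
  thus "?v \<preceq> x \<oplus> (y \<curlywedge> w)" using assms by (simp add: canl canl2)
qed (use assms in auto)

lemma K: assumes "a \<in> C" "b \<in> C" shows "(a \<curlyvee> b) \<oplus> (a \<curlywedge> b) = a \<oplus> b"
proof (rule lanti)
  have "(a \<curlywedge> b) \<oplus> (a \<curlyvee> b) = ((a \<curlywedge> b) \<oplus> a) \<curlyvee> ((a \<curlywedge> b) \<oplus> b)" using assms by (simp add: ld)
  also have "\<dots> \<preceq> a \<oplus> b" using assms
  proof (intro jlub)
    have "(a \<curlywedge> b) \<oplus> a \<preceq> b \<oplus> a" using assms by (intro mono2 ml2) auto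
    thus "(a \<curlywedge> b) \<oplus> a \<preceq> a \<oplus> b" using assms by (simp add: comm[of b a])
    show "(a \<curlywedge> b) \<oplus> b \<preceq> a \<oplus> b" using assms by (intro mono2 ml1) auto
  qed (use assms in auto)
  finally show "(a \<curlyvee> b) \<oplus> (a \<curlywedge> b) \<preceq> a \<oplus> b" using assms by (simp add: comm)
  let ?c = "a \<oplus> b \<oplus> ng (a \<curlyvee> b)"
  have "?c \<preceq> a \<curlywedge> b"
  proof (rule mglb)
    have "?c \<preceq> a \<oplus> (a \<curlyvee> b) \<oplus> ng (a \<curlyvee> b)" using assms by (intro mono2 mono ju2) auto
    thus "?c \<preceq> a" using assms by (simp add: assoc)
    have "?c \<preceq> (a \<curlyvee> b) \<oplus> b \<oplus> ng (a \<curlyvee> b)" using assms by (intro mono2 ju1) auto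
    moreover have "(a \<curlyvee> b) \<oplus> b \<oplus> ng (a \<curlyvee> b) = b \<oplus> ((a \<curlyvee> b) \<oplus> ng (a \<curlyvee> b))"
      using assms by (simp add: comm[of "a \<curlyvee> b" b] assoc)
    ultimately show "?c \<preceq> b" using assms by simp
  qed (use assms in auto)
  hence "?c \<oplus> (a \<curlyvee> b) \<preceq> (a \<curlywedge> b) \<oplus> (a \<curlyvee> b)" using assms by (intro mono2) auto
  moreover have "?c \<oplus> (a \<curlyvee> b) = a \<oplus> b" using assms by (simp add: assoc)
  moreover have "(a \<curlywedge> b) \<oplus> (a \<curlyvee> b) = (a \<curlyvee> b) \<oplus> (a \<curlywedge> b)" using assms by (simp add: comm[of "a \<curlywedge> b"])
  ultimately show "a \<oplus> b \<preceq> (a \<curlyvee> b) \<oplus> (a \<curlywedge> b)" by simp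
qed (use assms in auto)

lemma rmd: "x \<in> C \<Longrightarrow> y \<in> C \<Longrightarrow> w \<in> C \<Longrightarrow> (y \<curlywedge> w) \<oplus> x = (y \<oplus> x) \<curlywedge> (w \<oplus> x)"
  by (simp add: comm[of "y \<curlywedge> w" x] md comm[of x y] comm[of x w])
lemma rd: "x \<in> C \<Longrightarrow> y \<in> C \<Longrightarrow> w \<in> C \<Longrightarrow> (y \<curlyvee> w) \<oplus> x = (y \<oplus> x) \<curlyvee> (w \<oplus> x)"
  by (simp add: comm[of "y \<curlyvee> w" x] ld comm[of x y] comm[of x w])
lemma mono_both: "a \<in> C \<Longrightarrow> b \<in> C \<Longrightarrow> c \<in> C \<Longrightarrow> d \<in> C \<Longrightarrow> a \<preceq> b \<Longrightarrow> c \<preceq> d \<Longrightarrow> a \<oplus> c \<preceq> b \<oplus> d"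
proof -
  assume h: "a \<in> C" "b \<in> C" "c \<in> C" "d \<in> C" "a \<preceq> b" "c \<preceq> d"
  have "a \<oplus> c \<preceq> b \<oplus> c" using h by (intro mono2) auto
  moreover have "b \<oplus> c \<preceq> b \<oplus> d" using h by (intro mono) auto
  ultimately show ?thesis using h ltrans[of "a \<oplus> c" "b \<oplus> c" "b \<oplus> d"] by auto
qed

lemma distr: assumes "x \<in> C" "y \<in> C" "c \<in> C" shows "x \<curlywedge> (y \<curlyvee> c) = (x \<curlywedge> y) \<curlyvee> (x \<curlywedge> c)"
proof -
  let ?u = "x \<curlywedge> (y \<curlyvee> c)" and ?v = "(x \<curlywedge> y) \<curlyvee> (x \<curlywedge> c)" and ?t = "(x \<curlywedge> y) \<curlywedge> (x \<curlywedge> c)"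
  have C: "?u \<in> C" "?v \<in> C" "?t \<in> C" "x \<curlywedge> y \<in> C" "x \<curlywedge> c \<in> C" "y \<curlyvee> c \<in> C" using assms by auto
  have ux: "?u \<preceq> x" "?u \<preceq> y \<curlyvee> c" using assms by (auto intro: ml1 ml2)
  have tx: "?t \<preceq> x" "?t \<preceq> y" "?t \<preceq> c" using assms C
    using ltrans[of ?t "x \<curlywedge> y" x] ltrans[of ?t "x \<curlywedge> y" y] ltrans[of ?t "x \<curlywedge> c" c]
      ml1[of "x \<curlywedge> y" "x \<curlywedge> c"] ml2[of "x \<curlywedge> y" "x \<curlywedge> c"] ml1[of x y] ml2[of x y] ml2[of x c]
    by auto
  have vu: "?v \<preceq> ?u"
  proof -
    have "x \<curlywedge> y \<preceq> y \<curlyvee> c" using assms ml2[of x y] ju1[of y c] ltrans[of "x \<curlywedge> y" y "y \<curlyvee> c"] by auto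
    moreover have "x \<curlywedge> c \<preceq> y \<curlyvee> c" using assms ml2[of x c] ju2[of y c] ltrans[of "x \<curlywedge> c" c "y \<curlyvee> c"] by auto
    ultimately show ?thesis using assms C by (intro jlub mglb) (auto intro: ml1)
  qed
  have e: "?v \<oplus> ?t = ((x \<oplus> x) \<curlywedge> (y \<oplus> x)) \<curlywedge> ((x \<oplus> c) \<curlywedge> (y \<oplus> c))"
  proof -
    have "?v \<oplus> ?t = (x \<curlywedge> y) \<oplus> (x \<curlywedge> c)" using C(4,5) by (rule K)
    also have "\<dots> = ((x \<curlywedge> y) \<oplus> x) \<curlywedge> ((x \<curlywedge> y) \<oplus> c)" using assms C by (simp add: md)
    also have "\<dots> = ((x \<oplus> x) \<curlywedge> (y \<oplus> x)) \<curlywedge> ((x \<oplus> c) \<curlywedge> (y \<oplus> c))" using assms by (simp add: rmd)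
    finally show ?thesis .
  qed
  have "?u \<oplus> ?t \<preceq> ?v \<oplus> ?t"
    unfolding e
  proof (intro mglb)
    show "?u \<oplus> ?t \<preceq> x \<oplus> x" "?u \<oplus> ?t \<preceq> x \<oplus> c"
      using assms C ux tx by (auto intro: mono_both)
    show "?u \<oplus> ?t \<preceq> y \<oplus> x"
      using assms C ux tx by (auto intro: mono_both simp: comm[of y x])
    have "?u \<oplus> ?t \<preceq> (y \<curlyvee> c) \<oplus> ?t" using assms C ux by (intro mono2) auto
    also have "(y \<curlyvee> c) \<oplus> ?t = (y \<oplus> ?t) \<curlyvee> (c \<oplus> ?t)" using assms C by (simp add: rd)
    moreover have "(y \<oplus> ?t) \<curlyvee> (c \<oplus> ?t) \<preceq> y \<oplus> c" using assms C tx
    proof (intro jlub)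
      show "y \<oplus> ?t \<preceq> y \<oplus> c" using assms C tx by (intro mono) auto
      have "c \<oplus> ?t \<preceq> c \<oplus> y" using assms C tx by (intro mono) auto
      thus "c \<oplus> ?t \<preceq> y \<oplus> c" using assms by (simp add: comm[of c y])
    qed (use assms C in auto)
    ultimately show "?u \<oplus> ?t \<preceq> y \<oplus> c" using assms C ltrans[of "?u \<oplus> ?t" "(y \<oplus> ?t) \<curlyvee> (c \<oplus> ?t)" "y \<oplus> c"] by auto
  qed (use assms in auto)
  moreover have "?u \<oplus> ?t = ?t \<oplus> ?u" "?v \<oplus> ?t = ?t \<oplus> ?v" using C by (simp_all add: comm[of _ ?t])
  ultimately have "?t \<oplus> ?u \<preceq> ?t \<oplus> ?v" by simp
  hence "?u \<preceq> ?v" using C reflect[of ?t ?u ?v] by simp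
  thus ?thesis using vu C lanti[of ?u ?v] by simp
qed

lemma ns_cl[simp]: "x \<in> C \<Longrightarrow> nsum G n x \<in> C" by (induct n) auto

lemma ngng[simp]: "x \<in> C \<Longrightarrow> ng (ng x) = x"
  by (rule cancel[of _ _ "ng x"]) auto

lemma ns_ng: "x \<in> C \<Longrightarrow> nsum G n (ng x) = ng (nsum G n x)"
proof (induct n)
  case (Suc n)
  have "nsum G (Suc n) (ng x) \<oplus> nsum G (Suc n) x = (ng x \<oplus> x) \<oplus> (nsum G n (ng x) \<oplus> nsum G n x)"
    using Suc by (simp add: ac)
  also have "\<dots> = z" using Suc by simp
  finally have h: "nsum G (Suc n) (ng x) \<oplus> nsum G (Suc n) x = z" .
  show ?case by (rule cancel[of _ _ "nsum G (Suc n) x"]) (use Suc h in auto)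
next
  case 0 show ?case using linv[of z] by simp
qed

lemma ng_anti: "a \<in> C \<Longrightarrow> b \<in> C \<Longrightarrow> a \<preceq> b \<Longrightarrow> ng b \<preceq> ng a"
proof -
  assume a: "a \<in> C" "b \<in> C" "a \<preceq> b"
  hence "(ng b \<oplus> ng a) \<oplus> a \<preceq> (ng b \<oplus> ng a) \<oplus> b" by (intro mono) auto
  moreover have "(ng b \<oplus> ng a) \<oplus> a = ng b" using a by (simp add: assoc)
  moreover have "(ng b \<oplus> ng a) \<oplus> b = ng a" using a by (simp add: assoc comm[of "ng b" "ng a"])
  ultimately show ?thesis by simp
qed

lemma ns_mono: "x \<in> C \<Longrightarrow> z \<preceq> x \<Longrightarrow> m \<le> n \<Longrightarrow> nsum G m x \<preceq> nsum G n x"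
proof (induct n)
  case 0 thus ?case by (simp add: lrefl)
next
  case (Suc n)
  show ?case
  proof (cases "m = Suc n")
    case True thus ?thesis using Suc by (simp add: lrefl del: nsum.simps)
  next
    case False
    hence "nsum G m x \<preceq> nsum G n x" using Suc by auto
    moreover have "z \<oplus> nsum G n x \<preceq> x \<oplus> nsum G n x" using Suc by (intro mono2) auto
    ultimately show ?thesis using Suc ltrans[of "nsum G m x" "nsum G n x" "x \<oplus> nsum G n x"] by simp
  qed
qed

end

lemma embeds_imp:
  fixes M :: "('a,'b) alg_scheme" and G :: "('c,'d) lgrp_scheme"
  assumes A: "is_alg M" and GG: "unital_comm_lgroup G" and E: "embeds M G"
  shows "cancellative M \<and> ucdlm M"
proof -
  interpret lg G by (rule lg.intro[OF GG])
  obtain f where f: "f ` car M \<subseteq> car G" "inj_on f (car M)"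
    and h: "\<forall>x\<in>car M. \<forall>y\<in>car M. f (add M x y) = add G (f x) (f y)
          \<and> f (jn M x y) = jn G (f x) (f y) \<and> f (mt M x y) = mt G (f x) (f y)"
    and hz: "f (zr M) = zr G" and ho: "f (one M) = one G" and hm: "f (mone M) = mone G"
    using E unfolding embeds_def by blast
  have MC[simp]: "x \<in> car M \<Longrightarrow> y \<in> car M \<Longrightarrow> add M x y \<in> car M"
    "x \<in> car M \<Longrightarrow> y \<in> car M \<Longrightarrow> jn M x y \<in> car M"
    "x \<in> car M \<Longrightarrow> y \<in> car M \<Longrightarrow> mt M x y \<in> car M"
    "zr M \<in> car M" "one M \<in> car M" "mone M \<in> car M" for x y
    using A unfolding is_alg_def by auto
  have fC[simp]: "x \<in> car M \<Longrightarrow> f x \<in> car G" for x using f by auto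
  have hom[simp]: "x \<in> car M \<Longrightarrow> y \<in> car M \<Longrightarrow> f (add M x y) = f x \<oplus> f y"
    "x \<in> car M \<Longrightarrow> y \<in> car M \<Longrightarrow> f (jn M x y) = f x \<curlyvee> f y"
    "x \<in> car M \<Longrightarrow> y \<in> car M \<Longrightarrow> f (mt M x y) = f x \<curlywedge> f y" for x y
    using h by auto
  have inj: "x \<in> car M \<Longrightarrow> y \<in> car M \<Longrightarrow> f x = f y \<Longrightarrow> x = y" for x y
    using f(2) unfolding inj_on_def by blast
  have fle: "x \<in> car M \<Longrightarrow> y \<in> car M \<Longrightarrow> ale M x y \<longleftrightarrow> f x \<preceq> f y" for x y
  proof -
    assume xy: "x \<in> car M" "y \<in> car M"
    have e: "f (jn M x y) = f x \<curlyvee> f y" using xy by simp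
    have "jn M x y = y \<longleftrightarrow> f (jn M x y) = f y"
    proof
      assume "f (jn M x y) = f y" thus "jn M x y = y" using xy inj[of "jn M x y" y] by simp
    qed simp
    thus ?thesis unfolding ale_def e .
  qed
  have nsC[simp]: "x \<in> car M \<Longrightarrow> nsum M n x \<in> car M" for x n by (induct n) auto
  have fns: "x \<in> car M \<Longrightarrow> f (nsum M n x) = nsum G n (f x)" for x n by (induct n) (auto simp: hz)
  have canc: "cancellative M" unfolding cancellative_def
  proof (intro ballI impI)
    fix x y w assume a: "x \<in> car M" "y \<in> car M" "w \<in> car M" "add M x w = add M y w"
    hence "f (add M x w) = f (add M y w)" by simp
    hence "f x \<oplus> f w = f y \<oplus> f w" using a(1-3) by simp
    hence "f x = f y" using a cancel[of "f x" "f y" "f w"] by auto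
    thus "x = y" using a inj[of x y] by auto
  qed
  have dl: "distrib_lattice_on M" unfolding distrib_lattice_on_def
    by (intro conjI ballI; rule inj) (auto simp: ja ma jab mab distr intro: jc mc)
  have cm: "comm_monoid_on M" unfolding comm_monoid_on_def
    by (intro conjI ballI; rule inj) (auto simp: ac hz)
  have dd: "\<forall>x\<in>car M. \<forall>y\<in>car M. \<forall>w\<in>car M.
        add M x (jn M y w) = jn M (add M x y) (add M x w)
      \<and> add M x (mt M y w) = mt M (add M x y) (add M x w)"
    by (intro conjI ballI; rule inj) (auto simp: ld md)
  have u: "one G \<in> C" "z \<preceq> one G" by (auto simp: zu)
  have ngz: "ng z = z" using linv[of z] by simp
  have mo1: "add M (mone M) (one M) = zr M" by (rule inj) (auto simp: hm ho hz mo)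
  have mo2: "ale M (mone M) (zr M)" using ng_anti[OF cl(5) u(1) u(2)] by (simp add: fle hm hz mo ngz)
  have mo3: "ale M (zr M) (one M)" by (simp add: fle ho hz zu)
  have bd: "\<exists>n. n \<noteq> 0 \<and> ale M (nsum M n (mone M)) x \<and> ale M x (nsum M n (one M))" if x: "x \<in> car M" for x
  proof -
    obtain n1 where n1: "f x \<preceq> nsum G n1 (one G)" using su[of "f x"] x by auto
    obtain n2 where n2: "ng (f x) \<preceq> nsum G n2 (one G)" using su[of "ng (f x)"] x by auto
    let ?N = "Suc (n1 + n2)"
    have "nsum G n1 (one G) \<preceq> nsum G ?N (one G)" using u by (intro ns_mono) auto
    hence a1: "f x \<preceq> nsum G ?N (one G)" using n1 x u ltrans[of "f x" "nsum G n1 (one G)" "nsum G ?N (one G)"] by auto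
    have "nsum G n2 (one G) \<preceq> nsum G ?N (one G)" using u by (intro ns_mono) auto
    hence "ng (f x) \<preceq> nsum G ?N (one G)" using n2 x u ltrans[of "ng (f x)" "nsum G n2 (one G)" "nsum G ?N (one G)"] by auto
    hence "ng (nsum G ?N (one G)) \<preceq> ng (ng (f x))" using x u by (intro ng_anti) auto
    moreover have "nsum G ?N (mone G) = ng (nsum G ?N (one G))" unfolding mo by (rule ns_ng[OF u(1)])
    ultimately have a2: "nsum G ?N (mone G) \<preceq> f x" using x by (simp del: nsum.simps)
    show ?thesis using a1 a2 x by (intro exI[of _ ?N]) (simp add: fle fns hm ho)
  qed
  show ?thesis using canc dl cm dd mo1 mo2 mo3 bd A unfolding ucdlm_def by blast
qed



locale cm = fixes M :: "('a,'b) alg_scheme"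
  assumes A: "is_alg M" and CA: "cancellative M" and U: "ucdlm M"
begin

abbreviation pl (infixl "\<oplus>" 65) where "x \<oplus> y \<equiv> add M x y"
abbreviation jj (infixl "\<curlyvee>" 67) where "x \<curlyvee> y \<equiv> jn M x y"
abbreviation mm (infixl "\<curlywedge>" 68) where "x \<curlywedge> y \<equiv> mt M x y"
abbreviation le (infix "\<preceq>" 50) where "x \<preceq> y \<equiv> ale M x y"
abbreviation "C \<equiv> car M"
abbreviation "zz \<equiv> zr M"
abbreviation "u \<equiv> one M"
abbreviation "v \<equiv> mone M"

lemma cl[simp]: "x \<in> C \<Longrightarrow> y \<in> C \<Longrightarrow> x \<oplus> y \<in> C" "x \<in> C \<Longrightarrow> y \<in> C \<Longrightarrow> x \<curlyvee> y \<in> C"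
  "x \<in> C \<Longrightarrow> y \<in> C \<Longrightarrow> x \<curlywedge> y \<in> C" "zz \<in> C" "u \<in> C" "v \<in> C"
  using A unfolding is_alg_def by auto

lemma assoc: "x \<in> C \<Longrightarrow> y \<in> C \<Longrightarrow> w \<in> C \<Longrightarrow> x \<oplus> y \<oplus> w = x \<oplus> (y \<oplus> w)"
  and comm: "x \<in> C \<Longrightarrow> y \<in> C \<Longrightarrow> x \<oplus> y = y \<oplus> x"
  and lz[simp]: "x \<in> C \<Longrightarrow> zz \<oplus> x = x"
  using U unfolding ucdlm_def comm_monoid_on_def by auto

lemma comm_left: "x \<in> C \<Longrightarrow> y \<in> C \<Longrightarrow> w \<in> C \<Longrightarrow> x \<oplus> (y \<oplus> w) = y \<oplus> (x \<oplus> w)"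
  by (metis assoc comm)
lemmas ac = assoc comm comm_left
lemma rz[simp]: "x \<in> C \<Longrightarrow> x \<oplus> zz = x" by (metis comm lz cl(4))

lemma jc: "x \<in> C \<Longrightarrow> y \<in> C \<Longrightarrow> x \<curlyvee> y = y \<curlyvee> x"
  and mc: "x \<in> C \<Longrightarrow> y \<in> C \<Longrightarrow> x \<curlywedge> y = y \<curlywedge> x"
  and ja: "x \<in> C \<Longrightarrow> y \<in> C \<Longrightarrow> w \<in> C \<Longrightarrow> x \<curlyvee> y \<curlyvee> w = x \<curlyvee> (y \<curlyvee> w)"
  and ma: "x \<in> C \<Longrightarrow> y \<in> C \<Longrightarrow> w \<in> C \<Longrightarrow> x \<curlywedge> y \<curlywedge> w = x \<curlywedge> (y \<curlywedge> w)"
  and jab: "x \<in> C \<Longrightarrow> y \<in> C \<Longrightarrow> x \<curlyvee> (x \<curlywedge> y) = x"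
  and mab: "x \<in> C \<Longrightarrow> y \<in> C \<Longrightarrow> x \<curlywedge> (x \<curlyvee> y) = x"
  and ld: "x \<in> C \<Longrightarrow> y \<in> C \<Longrightarrow> w \<in> C \<Longrightarrow> x \<oplus> (y \<curlyvee> w) = (x \<oplus> y) \<curlyvee> (x \<oplus> w)"
  and lmd: "x \<in> C \<Longrightarrow> y \<in> C \<Longrightarrow> w \<in> C \<Longrightarrow> x \<oplus> (y \<curlywedge> w) = (x \<oplus> y) \<curlywedge> (x \<oplus> w)"
  and vu: "v \<oplus> u = zz"
  and ou: "zz \<preceq> u"
  and bd: "x \<in> C \<Longrightarrow> \<exists>n. n \<noteq> 0 \<and> nsum M n v \<preceq> x \<and> x \<preceq> nsum M n u"
  using U unfolding ucdlm_def distrib_lattice_on_def by auto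

lemma rd: "x \<in> C \<Longrightarrow> y \<in> C \<Longrightarrow> w \<in> C \<Longrightarrow> (y \<curlyvee> w) \<oplus> x = (y \<oplus> x) \<curlyvee> (w \<oplus> x)"
  by (simp add: comm[of _ x] ld)
lemma rmd: "x \<in> C \<Longrightarrow> y \<in> C \<Longrightarrow> w \<in> C \<Longrightarrow> (y \<curlywedge> w) \<oplus> x = (y \<oplus> x) \<curlywedge> (w \<oplus> x)"
  by (simp add: comm[of _ x] lmd)

lemma canc: "x \<in> C \<Longrightarrow> y \<in> C \<Longrightarrow> w \<in> C \<Longrightarrow> x \<oplus> w = y \<oplus> w \<Longrightarrow> x = y"
  using CA unfolding cancellative_def by blast

lemma canc_iff[simp]: "x \<in> C \<Longrightarrow> y \<in> C \<Longrightarrow> w \<in> C \<Longrightarrow> (x \<oplus> w = y \<oplus> w) = (x = y)"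
  using canc by blast

definition cls :: "'a \<Rightarrow> 'a \<Rightarrow> ('a \<times> 'a) set" where
  "cls a b = {(c,d). c \<in> C \<and> d \<in> C \<and> a \<oplus> d = c \<oplus> b}"

definition GC :: "('a \<times> 'a) set set" where
  "GC = {cls a b | a b. a \<in> C \<and> b \<in> C}"

definition rep :: "('a \<times> 'a) set \<Rightarrow> 'a \<times> 'a" where "rep X = (SOME p. p \<in> X)"

definition addG where "addG X Y = cls (fst (rep X) \<oplus> fst (rep Y)) (snd (rep X) \<oplus> snd (rep Y))"
definition jnG where "jnG X Y = cls ((fst (rep X) \<oplus> snd (rep Y)) \<curlyvee> (fst (rep Y) \<oplus> snd (rep X))) (snd (rep X) \<oplus> snd (rep Y))"
definition mtG where "mtG X Y = cls ((fst (rep X) \<oplus> snd (rep Y)) \<curlywedge> (fst (rep Y) \<oplus> snd (rep X))) (snd (rep X) \<oplus> snd (rep Y))"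
definition negG where "negG X = cls (snd (rep X)) (fst (rep X))"

lemma cls_eq: "a \<in> C \<Longrightarrow> b \<in> C \<Longrightarrow> c \<in> C \<Longrightarrow> d \<in> C \<Longrightarrow> (cls a b = cls c d) = (a \<oplus> d = c \<oplus> b)"
proof
  assume a: "a \<in> C" "b \<in> C" "c \<in> C" "d \<in> C" "cls a b = cls c d"
  have "(c,d) \<in> cls c d" using a unfolding cls_def by auto
  thus "a \<oplus> d = c \<oplus> b" using a unfolding cls_def by auto
next
  assume a: "a \<in> C" "b \<in> C" "c \<in> C" "d \<in> C" and e: "a \<oplus> d = c \<oplus> b"
  have "a \<oplus> y = x \<oplus> b \<longleftrightarrow> c \<oplus> y = x \<oplus> d" if "x \<in> C" "y \<in> C" for x y
  proof -
    have "a \<oplus> y = x \<oplus> b \<longleftrightarrow> (a \<oplus> y) \<oplus> d = (x \<oplus> b) \<oplus> d" using a that by simp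
    also have "\<dots> \<longleftrightarrow> (a \<oplus> d) \<oplus> y = (x \<oplus> d) \<oplus> b" using a that by (simp add: ac)
    also have "\<dots> \<longleftrightarrow> (c \<oplus> b) \<oplus> y = (x \<oplus> d) \<oplus> b" using e by simp
    also have "\<dots> \<longleftrightarrow> (c \<oplus> y) \<oplus> b = (x \<oplus> d) \<oplus> b" using a that by (simp add: ac)
    also have "\<dots> \<longleftrightarrow> c \<oplus> y = x \<oplus> d" using a that by simp
    finally show ?thesis .
  qed
  thus "cls a b = cls c d" unfolding cls_def by auto
qed

lemma rep_cls: assumes "a \<in> C" "b \<in> C"
  shows "fst (rep (cls a b)) \<in> C" "snd (rep (cls a b)) \<in> C" "a \<oplus> snd (rep (cls a b)) = fst (rep (cls a b)) \<oplus> b"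
proof -
  have "(a,b) \<in> cls a b" using assms unfolding cls_def by auto
  hence "rep (cls a b) \<in> cls a b" unfolding rep_def by (rule someI)
  thus "fst (rep (cls a b)) \<in> C" "snd (rep (cls a b)) \<in> C" "a \<oplus> snd (rep (cls a b)) = fst (rep (cls a b)) \<oplus> b"
    unfolding cls_def by auto
qed

lemma add_cls: assumes "a \<in> C" "b \<in> C" "c \<in> C" "d \<in> C"
  shows "addG (cls a b) (cls c d) = cls (a \<oplus> c) (b \<oplus> d)"
proof -
  obtain a' b' c' d' where r: "rep (cls a b) = (a',b')" "rep (cls c d) = (c',d')" by fastforce
  note ra = rep_cls[OF assms(1,2), unfolded r fst_conv snd_conv]
  note rc = rep_cls[OF assms(3,4), unfolded r fst_conv snd_conv]
  have "(a' \<oplus> c') \<oplus> (b \<oplus> d) = (a' \<oplus> b) \<oplus> (c' \<oplus> d)" using ra(1,2) rc(1,2) assms by (simp add: ac)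
  also have "\<dots> = (a \<oplus> b') \<oplus> (c \<oplus> d')" by (simp only: ra(3) rc(3))
  also have "\<dots> = (a \<oplus> c) \<oplus> (b' \<oplus> d')" using ra(1,2) rc(1,2) assms by (simp add: ac)
  finally show ?thesis unfolding addG_def r fst_conv snd_conv using ra rc assms by (simp add: cls_eq)
qed

lemma neg_cls: assumes "a \<in> C" "b \<in> C" shows "negG (cls a b) = cls b a"
proof -
  obtain a' b' where r: "rep (cls a b) = (a',b')" by fastforce
  note ra = rep_cls[OF assms(1,2), unfolded r fst_conv snd_conv]
  show ?thesis unfolding negG_def r fst_conv snd_conv using ra assms by (simp add: cls_eq comm)
qed

lemma jn_cls: assumes "a \<in> C" "b \<in> C" "c \<in> C" "d \<in> C"
  shows "jnG (cls a b) (cls c d) = cls ((a \<oplus> d) \<curlyvee> (c \<oplus> b)) (b \<oplus> d)"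
proof -
  obtain a' b' c' d' where r: "rep (cls a b) = (a',b')" "rep (cls c d) = (c',d')" by fastforce
  note ra = rep_cls[OF assms(1,2), unfolded r fst_conv snd_conv]
  note rc = rep_cls[OF assms(3,4), unfolded r fst_conv snd_conv]
  have e1: "(a' \<oplus> d') \<oplus> (b \<oplus> d) = (a \<oplus> d) \<oplus> (b' \<oplus> d')"
  proof -
    have "(a' \<oplus> d') \<oplus> (b \<oplus> d) = (a' \<oplus> b) \<oplus> (d' \<oplus> d)" using ra(1,2) rc(1,2) assms by (simp add: ac)
    also have "\<dots> = (a \<oplus> b') \<oplus> (d' \<oplus> d)" by (simp only: ra(3))
    also have "\<dots> = (a \<oplus> d) \<oplus> (b' \<oplus> d')" using ra(1,2) rc(1,2) assms by (simp add: ac)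
    finally show ?thesis .
  qed
  have e2: "(c' \<oplus> b') \<oplus> (b \<oplus> d) = (c \<oplus> b) \<oplus> (b' \<oplus> d')"
  proof -
    have "(c' \<oplus> b') \<oplus> (b \<oplus> d) = (c' \<oplus> d) \<oplus> (b' \<oplus> b)" using ra(1,2) rc(1,2) assms by (simp add: ac)
    also have "\<dots> = (c \<oplus> d') \<oplus> (b' \<oplus> b)" by (simp only: rc(3))
    also have "\<dots> = (c \<oplus> b) \<oplus> (b' \<oplus> d')" using ra(1,2) rc(1,2) assms by (simp add: ac)
    finally show ?thesis .
  qed
  have "((a' \<oplus> d') \<curlyvee> (c' \<oplus> b')) \<oplus> (b \<oplus> d) = ((a \<oplus> d) \<curlyvee> (c \<oplus> b)) \<oplus> (b' \<oplus> d')"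
    using ra rc assms e1 e2 by (simp add: rd)
  thus ?thesis unfolding jnG_def r fst_conv snd_conv using ra rc assms by (simp add: cls_eq)
qed

lemma mt_cls: assumes "a \<in> C" "b \<in> C" "c \<in> C" "d \<in> C"
  shows "mtG (cls a b) (cls c d) = cls ((a \<oplus> d) \<curlywedge> (c \<oplus> b)) (b \<oplus> d)"
proof -
  obtain a' b' c' d' where r: "rep (cls a b) = (a',b')" "rep (cls c d) = (c',d')" by fastforce
  note ra = rep_cls[OF assms(1,2), unfolded r fst_conv snd_conv]
  note rc = rep_cls[OF assms(3,4), unfolded r fst_conv snd_conv]
  have e1: "(a' \<oplus> d') \<oplus> (b \<oplus> d) = (a \<oplus> d) \<oplus> (b' \<oplus> d')"
  proof -
    have "(a' \<oplus> d') \<oplus> (b \<oplus> d) = (a' \<oplus> b) \<oplus> (d' \<oplus> d)" using ra(1,2) rc(1,2) assms by (simp add: ac)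
    also have "\<dots> = (a \<oplus> b') \<oplus> (d' \<oplus> d)" by (simp only: ra(3))
    also have "\<dots> = (a \<oplus> d) \<oplus> (b' \<oplus> d')" using ra(1,2) rc(1,2) assms by (simp add: ac)
    finally show ?thesis .
  qed
  have e2: "(c' \<oplus> b') \<oplus> (b \<oplus> d) = (c \<oplus> b) \<oplus> (b' \<oplus> d')"
  proof -
    have "(c' \<oplus> b') \<oplus> (b \<oplus> d) = (c' \<oplus> d) \<oplus> (b' \<oplus> b)" using ra(1,2) rc(1,2) assms by (simp add: ac)
    also have "\<dots> = (c \<oplus> d') \<oplus> (b' \<oplus> b)" by (simp only: rc(3))
    also have "\<dots> = (c \<oplus> b) \<oplus> (b' \<oplus> d')" using ra(1,2) rc(1,2) assms by (simp add: ac)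
    finally show ?thesis .
  qed
  have "((a' \<oplus> d') \<curlywedge> (c' \<oplus> b')) \<oplus> (b \<oplus> d) = ((a \<oplus> d) \<curlywedge> (c \<oplus> b)) \<oplus> (b' \<oplus> d')"
    using ra rc assms e1 e2 by (simp add: rmd)
  thus ?thesis unfolding mtG_def r fst_conv snd_conv using ra rc assms by (simp add: cls_eq)
qed

lemma cls_shift: "a \<in> C \<Longrightarrow> b \<in> C \<Longrightarrow> e \<in> C \<Longrightarrow> cls (a \<oplus> e) (b \<oplus> e) = cls a b"
  by (simp add: cls_eq ac)

lemma jn_cd: "a \<in> C \<Longrightarrow> c \<in> C \<Longrightarrow> e \<in> C \<Longrightarrow> jnG (cls a e) (cls c e) = cls (a \<curlyvee> c) e"
  by (simp add: jn_cls rd[symmetric] cls_shift)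
lemma mt_cd: "a \<in> C \<Longrightarrow> c \<in> C \<Longrightarrow> e \<in> C \<Longrightarrow> mtG (cls a e) (cls c e) = cls (a \<curlywedge> c) e"
  by (simp add: mt_cls rmd[symmetric] cls_shift)

lemma GC_cls[simp]: "a \<in> C \<Longrightarrow> b \<in> C \<Longrightarrow> cls a b \<in> GC" unfolding GC_def by auto
lemma GC_E: assumes "X \<in> GC" obtains a b where "a \<in> C" "b \<in> C" "X = cls a b"
  using assms unfolding GC_def by auto

lemma cd2: assumes "X \<in> GC" "Y \<in> GC"
  obtains a c e where "a \<in> C" "c \<in> C" "e \<in> C" "X = cls a e" "Y = cls c e"
proof -
  obtain a b c d where r: "a \<in> C" "b \<in> C" "X = cls a b" "c \<in> C" "d \<in> C" "Y = cls c d"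
    using assms by (metis GC_E)
  have e: "X = cls (a \<oplus> d) (b \<oplus> d)" "Y = cls (c \<oplus> b) (b \<oplus> d)" using r by (simp_all add: cls_eq ac)
  show ?thesis by (rule that[OF _ _ _ e]) (use r in auto)
qed

lemma cd3: assumes "X \<in> GC" "Y \<in> GC" "W \<in> GC"
  obtains a c g e where "a \<in> C" "c \<in> C" "g \<in> C" "e \<in> C" "X = cls a e" "Y = cls c e" "W = cls g e"
proof -
  obtain a b c d g h where r: "a \<in> C" "b \<in> C" "X = cls a b" "c \<in> C" "d \<in> C" "Y = cls c d"
     "g \<in> C" "h \<in> C" "W = cls g h"
    using assms by (metis GC_E)
  have "X = cls (a \<oplus> (d \<oplus> h)) (b \<oplus> (d \<oplus> h))" "Y = cls (c \<oplus> (b \<oplus> h)) (b \<oplus> (d \<oplus> h))"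
     "W = cls (g \<oplus> (b \<oplus> d)) (b \<oplus> (d \<oplus> h))"
    using r by (simp_all add: cls_eq ac)
  note e = this
  show ?thesis by (rule that[OF _ _ _ _ e]) (use r in auto)
qed

definition Gr :: "('a \<times> 'a) set lgrp" where
  "Gr = \<lparr>car = GC, add = addG, jn = jnG, mt = mtG, zr = cls zz zz, one = cls u zz, mone = cls v zz, neg = negG\<rparr>"

lemma ns_cl[simp]: "x \<in> C \<Longrightarrow> nsum M n x \<in> C" by (induct n) auto
lemma ns_add: "x \<in> C \<Longrightarrow> nsum M (m + n) x = nsum M m x \<oplus> nsum M n x" by (induct m) (auto simp: ac)
lemma ns_vu: "nsum M n u \<oplus> nsum M n v = zz"
proof (induct n)
  case (Suc n)
  have "nsum M (Suc n) u \<oplus> nsum M (Suc n) v = (v \<oplus> u) \<oplus> (nsum M n u \<oplus> nsum M n v)" by (simp add: ac)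
  thus ?case using Suc by (simp add: vu)
qed simp
lemma mmono: "x \<in> C \<Longrightarrow> y \<in> C \<Longrightarrow> w \<in> C \<Longrightarrow> y \<preceq> w \<Longrightarrow> x \<oplus> y \<preceq> x \<oplus> w"
  unfolding ale_def by (metis ld)
lemma mtrans: "x \<in> C \<Longrightarrow> y \<in> C \<Longrightarrow> w \<in> C \<Longrightarrow> x \<preceq> y \<Longrightarrow> y \<preceq> w \<Longrightarrow> x \<preceq> w"
  unfolding ale_def by (metis ja)

lemma ns_G: "nsum Gr n (cls u zz) = cls (nsum M n u) zz"
  by (induct n) (auto simp: Gr_def add_cls)

lemma Gr_one: "one Gr = cls u zz" and Gr_jn: "jn Gr = jnG" by (simp_all add: Gr_def)

lemma Gr_lg: "unital_comm_lgroup Gr"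
proof -
  have c1: "\<forall>x\<in>GC. \<forall>y\<in>GC. addG x y \<in> GC \<and> jnG x y \<in> GC \<and> mtG x y \<in> GC"
    by (auto elim!: GC_E simp: add_cls jn_cls mt_cls)
  have c2: "\<forall>x\<in>GC. negG x \<in> GC" by (auto elim!: GC_E simp: neg_cls)
  have cmo: "comm_monoid_on Gr" unfolding comm_monoid_on_def
    by (auto simp: Gr_def elim!: GC_E simp: add_cls cls_eq ac)
  have li: "\<forall>x\<in>GC. addG (negG x) x = cls zz zz"
    by (intro ballI, erule GC_E) (simp add: neg_cls add_cls cls_eq ac)
  have lat: "lattice_on Gr" unfolding lattice_on_def
  proof (intro conjI ballI; simp add: Gr_def)
    fix X Y assume "X \<in> GC" "Y \<in> GC"
    then obtain a c e where r: "a \<in> C" "c \<in> C" "e \<in> C" "X = cls a e" "Y = cls c e" by (rule cd2)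
    show "jnG X Y = jnG Y X" "mtG X Y = mtG Y X" "jnG X (mtG X Y) = X" "mtG X (jnG X Y) = X"
      using r by (simp_all add: jn_cd mt_cd jc mc jab mab)
  next
    fix X Y W assume "X \<in> GC" "Y \<in> GC" "W \<in> GC"
    then obtain a c g e where r: "a \<in> C" "c \<in> C" "g \<in> C" "e \<in> C" "X = cls a e" "Y = cls c e" "W = cls g e" by (rule cd3)
    show "jnG (jnG X Y) W = jnG X (jnG Y W)" "mtG (mtG X Y) W = mtG X (mtG Y W)"
      using r by (simp_all add: jn_cd mt_cd ja ma)
  qed
  have ldG: "\<forall>x\<in>GC. \<forall>y\<in>GC. \<forall>w\<in>GC. addG x (jnG y w) = jnG (addG x y) (addG x w)"
  proof (intro ballI)
    fix X Y W assume "X \<in> GC" "Y \<in> GC" "W \<in> GC"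
    then obtain a c g e where r: "a \<in> C" "c \<in> C" "g \<in> C" "e \<in> C" "X = cls a e" "Y = cls c e" "W = cls g e" by (rule cd3)
    show "addG X (jnG Y W) = jnG (addG X Y) (addG X W)"
      using r by (simp add: jn_cd add_cls ld)
  qed
  have zo: "ale Gr (zr Gr) (one Gr)" using ou unfolding ale_def by (simp add: Gr_def jn_cd)
  have su: "\<forall>g\<in>car Gr. \<exists>n. ale Gr g (nsum Gr n (one Gr))"
  proof
    fix X assume "X \<in> car Gr"
    then obtain a b where r: "a \<in> C" "b \<in> C" "X = cls a b" by (auto simp: Gr_def elim: GC_E)
    obtain n1 where n1: "a \<preceq> nsum M n1 u" using bd[OF r(1)] by auto
    obtain n2 where n2: "nsum M n2 v \<preceq> b" using bd[OF r(2)] by auto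
    let ?N = "n1 + n2"
    have "nsum M ?N u \<oplus> nsum M n2 v = nsum M n1 u"
      by (simp add: ns_add assoc ns_vu)
    moreover have "nsum M ?N u \<oplus> nsum M n2 v \<preceq> nsum M ?N u \<oplus> b" using n2 r by (intro mmono) auto
    ultimately have "a \<preceq> nsum M ?N u \<oplus> b" using n1 r by (metis mtrans ns_cl cl)
    hence "jnG (cls a b) (cls (nsum M ?N u \<oplus> b) b) = cls (nsum M ?N u \<oplus> b) b"
      using r by (simp add: jn_cd ale_def)
    moreover have "cls (nsum M ?N u \<oplus> b) b = cls (nsum M ?N u) zz" using r by (simp add: cls_eq)
    ultimately show "\<exists>n. ale Gr X (nsum Gr n (one Gr))" using r
      by (intro exI[of _ ?N]) (simp add: ale_def ns_G Gr_one Gr_jn)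
  qed
  have mo: "mone Gr = neg Gr (one Gr)" by (simp add: Gr_def neg_cls cls_eq vu)
  show ?thesis unfolding unital_comm_lgroup_def
    using c1 c2 cmo li lat ldG zo su mo by (simp add: Gr_def)
qed

lemma Gr_emb: "embeds M Gr"
  unfolding embeds_def
proof (intro exI[of _ "\<lambda>x. cls x zz"] conjI)
  show "(\<lambda>x. cls x zz) ` C \<subseteq> car Gr" by (auto simp: Gr_def)
  show "inj_on (\<lambda>x. cls x zz) C" unfolding inj_on_def by (simp add: cls_eq)
  show "\<forall>x\<in>C. \<forall>y\<in>C. cls (x \<oplus> y) zz = add Gr (cls x zz) (cls y zz) \<and>
     cls (x \<curlyvee> y) zz = jn Gr (cls x zz) (cls y zz) \<and> cls (x \<curlywedge> y) zz = mt Gr (cls x zz) (cls y zz)"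
    by (simp add: Gr_def add_cls jn_cd mt_cd)
qed (simp_all add: Gr_def)

end

theorem mainTheorem3:
  fixes M :: "'a alg"
  assumes "is_alg M"
  shows "((\<exists>G :: ('a \<times> 'a) set lgrp. unital_comm_lgroup G \<and> embeds M G)
            \<longleftrightarrow> cancellative M \<and> ucdlm M)
       \<and> (\<forall>G :: 'g lgrp. unital_comm_lgroup G \<and> embeds M G \<longrightarrow> cancellative M \<and> ucdlm M)"
proof -
  have bwd: "\<exists>G :: ('a \<times> 'a) set lgrp. unital_comm_lgroup G \<and> embeds M G"
    if h: "cancellative M \<and> ucdlm M"
  proof -
    interpret cm M using assms h by unfold_locales auto
    show ?thesis using Gr_lg Gr_emb by blast
  qed
  have f1: "cancellative M \<and> ucdlm M" if ex: "\<exists>G :: ('a \<times> 'a) set lgrp. unital_comm_lgroup G \<and> embeds M G"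
  proof -
    obtain G :: "('a \<times> 'a) set lgrp" where "unital_comm_lgroup G" "embeds M G" using ex by blast
    thus ?thesis by (rule embeds_imp[OF assms])
  qed
  have f2: "cancellative M \<and> ucdlm M" if "unital_comm_lgroup G" "embeds M G" for G :: "'g lgrp"
    using that by (rule embeds_imp[OF assms])
  show ?thesis using f1 f2 bwd by blast
qed

end
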